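(* Let $D\subset\mathbb N$ and let $g_1,g_2:D\to\mathbb R$ satisfy $g_2(n)\ge g_1(n)$ for all $n\in D$, $\lim_{n\to\infty}g_1(n)=\infty$ and $\lim_{n\to\infty}g_2(n)/n=0$. Let $f:D\to\mathbb R$ be such that there is $n_0\in D$ with $f(n)\ge g_1(n)$ for all $n\in D$, $n\ge n_0$, and suppose $f(n)\le g_2(n)$ for infinitely many $n\in D$. Then $\Omega(f)\ne\emptyset$, the slope set $A_f=\{a_1,\dots,a_k\}$ is finite, and $$a_1<a_2<\cdots<a_k=0.$$
   Context: Let $D=\{x_0<x_1<x_2<\cdots\}\subset\mathbb R$ be a strictly increasing sequence (finite or infinite) and $f:D\to\mathbb R$. A function $h:D\to\mathbb R$ is convex on $D$ if $h(x)\le \frac{(b-x)h(a)+(x-a)h(b)}{b-a}$ for all $a<x<b$ in $D$. Let $\Omega(f)$ be the set of convex $h:D\to\mathbb R$ with $h\le f$ on $D$. If $\Omega(f)\ne\emptyset$, the lower convex envelope of $f$ is $\breve f(x):=\sup\{h(x):h\in\Omega(f)\}$, a piecewise linear convex function on $D$. Its vertex set $H_f=\{m_0=x_0<m_1<m_2<\cdots\}\subset D$ consists of $x_0$ together with the points of $D$ at which $\breve f=f$ and $\breve f$ changes slope, so that $\breve f$ is linear on $D\cap[m_{i-1},m_i]$ for each $i$. The slope set $A_f=\{a_1<a_2<\cdots\}$ consists of the slopes $a_i=\frac{f(m_i)-f(m_{i-1})}{m_i-m_{i-1}}$ of $\breve f$ on $[m_{i-1},m_i]$; if $D$ is infinite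 and $H_f=\{m_0,\dots,m_k\}$ is finite, then $\breve f$ is linear on $D\cap[m_k,\infty)$ and $A_f=\{a_1,\dots,a_k,a_{k+1}\}$, where $a_{k+1}$ is the slope of $\breve f$ on $D\cap[m_k,\infty)$. *)

theory Defs
  imports Complex_Main
begin

text \<open>Discrete domain D :: nat set (strictly increasing sequence x_0 < x_1 < ...);
functions on D are represented as nat => real, values outside D are irrelevant.\<close>

definition convex_onD :: "nat set \<Rightarrow> (nat \<Rightarrow> real) \<Rightarrow> bool" where
  "convex_onD D h \<longleftrightarrow>
     (\<forall>a\<in>D. \<forall>x\<in>D. \<forall>b\<in>D. a < x \<and> x < b \<longrightarrow>
        h x \<le> ((real b - real x) * h a + (real x - real a) * h b) / (real b - real a))"

definition Omega :: "nat set \<Rightarrow> (nat \<Rightarrow> real) \<Rightarrow> (nat \<Rightarrow> real) set" where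
  "Omega D f = {h. convex_onD D h \<and> (\<forall>x\<in>D. h x \<le> f x)}"

text \<open>Lower convex envelope (meaningful when Omega D f is nonempty).\<close>
definition lce :: "nat set \<Rightarrow> (nat \<Rightarrow> real) \<Rightarrow> nat \<Rightarrow> real" where
  "lce D f x = (SUP h\<in>Omega D f. h x)"

definition succD :: "nat set \<Rightarrow> nat \<Rightarrow> nat" where
  "succD D x = (LEAST y. y \<in> D \<and> x < y)"

definition predD :: "nat set \<Rightarrow> nat \<Rightarrow> nat" where
  "predD D x = Max {y\<in>D. y < x}"

definition changes_slope :: "nat set \<Rightarrow> (nat \<Rightarrow> real) \<Rightarrow> nat \<Rightarrow> bool" where
  "changes_slope D g x \<longleftrightarrow>
     (\<exists>y\<in>D. y < x) \<and> (\<exists>y\<in>D. x < y) \<and>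
     (g x - g (predD D x)) / (real x - real (predD D x))
       \<noteq> (g (succD D x) - g x) / (real (succD D x) - real x)"

definition vertices :: "nat set \<Rightarrow> (nat \<Rightarrow> real) \<Rightarrow> nat set" where
  "vertices D f = {x\<in>D. x = (LEAST y. y \<in> D)}
      \<union> {x\<in>D. lce D f x = f x \<and> changes_slope D (lce D f) x}"

text \<open>Slope set A_f: slopes of the envelope between consecutive vertices, plus, when D is
infinite and H_f is finite, the slope of the envelope on D \<inter> [m_k, \<infinity>).\<close>
definition slopes :: "nat set \<Rightarrow> (nat \<Rightarrow> real) \<Rightarrow> real set" where
  "slopes D f =
     {(lce D f m' - lce D f m) / (real m' - real m) | m m'.
        m \<in> vertices D f \<and> m' \<in> vertices D f \<and> m < m' \<and>
        \<not> (\<exists>y\<in>vertices D f. m < y \<and> y < m')}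
   \<union> {(lce D f (succD D m) - lce D f m) / (real (succD D m) - real m) | m.
        infinite D \<and> finite (vertices D f) \<and> m = Max (vertices D f)}"

end

theory Submission
  imports Defs "HOL-Real_Asymp.Real_Asymp" "HOL-Library.Infinite_Set"
begin
lemma chord_mono:
  fixes a x b u u' v v' :: real
  assumes "a < x" "x < b" "u \<le> u'" "v \<le> v'"
  shows "((b-x)*u + (x-a)*v)/(b-a) \<le> ((b-x)*u' + (x-a)*v')/(b-a)"
proof -
  have "(b-x)*u + (x-a)*v \<le> (b-x)*u' + (x-a)*v'"
    using assms by (intro add_mono mult_left_mono) auto
  then show ?thesis using assms by (intro divide_right_mono) auto
qed

lemma chord_wide:
  fixes a p x q b A B P Q :: real
  assumes "a \<le> p" "p < x" "x < q" "q \<le> b"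
    and "P \<le> ((b-p)*A + (p-a)*B)/(b-a)" "Q \<le> ((b-q)*A + (q-a)*B)/(b-a)"
  shows "((q-x)*P + (x-p)*Q)/(q-p) \<le> ((b-x)*A + (x-a)*B)/(b-a)"
proof -
  have "((q-x)*P + (x-p)*Q)/(q-p) \<le> ((q-x)*(((b-p)*A + (p-a)*B)/(b-a)) + (x-p)*(((b-q)*A + (q-a)*B)/(b-a)))/(q-p)"
    using assms by (intro chord_mono) auto
  also have "\<dots> = ((b-x)*A + (x-a)*B)/(b-a)"
  proof -
    have ne: "b - a \<noteq> 0" "q - p \<noteq> 0" using assms by auto
    show ?thesis using ne by (simp add: divide_simps) (simp add: algebra_simps)
  qed
  finally show ?thesis .
qed

lemma chord_end_left:
  fixes a b A B :: real assumes "a < b" shows "A \<le> ((b-a)*A + (a-a)*B)/(b-a)"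
  using assms by simp

lemma chord_end_right:
  fixes a b A B :: real assumes "a < b" shows "B \<le> ((b-b)*A + (b-a)*B)/(b-a)"
  using assms by simp

lemma lce_upper:
  assumes "h \<in> Omega D f" "x \<in> D"
  shows "h x \<le> lce D f x"
  unfolding lce_def
proof (rule cSUP_upper[OF assms(1)])
  show "bdd_above ((\<lambda>h. h x) ` Omega D f)"
    using assms(2) by (intro bdd_aboveI2[where M="f x"]) (auto simp: Omega_def)
qed

lemma lce_le:
  assumes "Omega D f \<noteq> {}" "x \<in> D"
  shows "lce D f x \<le> f x"
  unfolding lce_def using assms by (intro cSUP_least) (auto simp: Omega_def)

lemma lce_convex:
  assumes "Omega D f \<noteq> {}"
  shows "convex_onD D (lce D f)"
  unfolding convex_onD_def
proof (intro ballI impI)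
  fix a x b assume D: "a \<in> D" "x \<in> D" "b \<in> D" and o: "a < x \<and> x < b"
  show "lce D f x \<le> ((real b - real x) * lce D f a + (real x - real a) * lce D f b) / (real b - real a)"
    unfolding lce_def[of D f x]
  proof (rule cSUP_least[OF assms])
    fix h assume h: "h \<in> Omega D f"
    then have "h x \<le> ((real b - real x) * h a + (real x - real a) * h b) / (real b - real a)"
      using D o by (auto simp: Omega_def convex_onD_def)
    also have "\<dots> \<le> ((real b - real x) * lce D f a + (real x - real a) * lce D f b) / (real b - real a)"
      using o by (intro chord_mono lce_upper[OF h] D) auto
    finally show "h x \<le> \<dots>" .
  qed
qed

lemma no_kink:
  assumes Om: "Omega D f \<noteq> {}" and D: "x \<in> D" "p \<in> D" "q \<in> D" and o: "p < x" "x < q"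
    and pmax: "\<forall>y\<in>D. y < x \<longrightarrow> y \<le> p" and qmin: "\<forall>y\<in>D. x < y \<longrightarrow> q \<le> y"
    and lt: "lce D f x < f x"
  shows "(lce D f x - lce D f p) / (real x - real p) = (lce D f q - lce D f x) / (real q - real x)"
proof -
  define L where "L = lce D f"
  have cv: "\<And>a y b. a \<in> D \<Longrightarrow> y \<in> D \<Longrightarrow> b \<in> D \<Longrightarrow> a < y \<Longrightarrow> y < b \<Longrightarrow>
     L y \<le> ((real b - real y) * L a + (real y - real a) * L b) / (real b - real a)"
    using lce_convex[OF Om] unfolding convex_onD_def L_def by blast
  define c where "c = ((real q - real x) * L p + (real x - real p) * L q) / (real q - real p)"
  have Lc: "L x \<le> c" unfolding c_def using cv D o by blast
  have eq: "L x = c"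
  proof (rule ccontr)
    assume "L x \<noteq> c"
    then have Lc2: "L x < c" using Lc by simp
    define e where "e = min (f x - L x) (c - L x)"
    have e0: "e > 0" using Lc2 lt unfolding e_def L_def by simp
    define h where "h = L(x := L x + e)"
    have hO: "h \<in> Omega D f"
      unfolding Omega_def
    proof (intro CollectI conjI ballI)
      fix y assume "y \<in> D"
      then show "h y \<le> f y" unfolding h_def e_def L_def using lce_le[OF Om] by auto
    next
      show "convex_onD D h" unfolding convex_onD_def
      proof (intro ballI impI)
        fix a y b assume abD: "a \<in> D" "y \<in> D" "b \<in> D" and ab: "a < y \<and> y < b"
        show "h y \<le> ((real b - real y) * h a + (real y - real a) * h b) / (real b - real a)"
        proof (cases "y = x")
          case True
          then have ap: "a \<le> p" and qb: "q \<le> b" using pmax qmin abD ab by auto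
          have hab: "h a = L a" "h b = L b" using ab True unfolding h_def by auto
          have P: "L p \<le> ((real b - real p) * L a + (real p - real a) * L b) / (real b - real a)"
          proof (cases "a = p")
            case True then show ?thesis using ab by simp
          next
            case False then show ?thesis using cv[of a p b] abD D ap o ab True by auto
          qed
          have Q: "L q \<le> ((real b - real q) * L a + (real q - real a) * L b) / (real b - real a)"
          proof (cases "b = q")
            case True then show ?thesis using ab by simp
          next
            case False then show ?thesis using cv[of a q b] abD D qb o ab True by auto
          qed
          have "h y = L x + e" using True h_def by simp
          also have "\<dots> \<le> c" unfolding e_def by simp
          also have "c \<le> ((real b - real x) * L a + (real x - real a) * L b) / (real b - real a)"
            unfolding c_def using ap o qb P Q by (intro chord_wide) auto
          finally show ?thesis using True hab by simp
        next
          case False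
          show ?thesis
          proof (cases "a = x")
            case True
            have "h y = L y" using False h_def by simp
            also have "\<dots> \<le> ((real b - real y) * L a + (real y - real a) * L b) / (real b - real a)"
              using cv abD ab by blast
            also have "\<dots> \<le> ((real b - real y) * h a + (real y - real a) * h b) / (real b - real a)"
              using ab True e0 unfolding h_def by (intro chord_mono) auto
            finally show ?thesis .
          next
            case F2: False
            show ?thesis
            proof (cases "b = x")
              case True
              have "h y = L y" using False h_def by simp
              also have "\<dots> \<le> ((real b - real y) * L a + (real y - real a) * L b) / (real b - real a)"
                using cv abD ab by blast
              also have "\<dots> \<le> ((real b - real y) * h a + (real y - real a) * h b) / (real b - real a)"
                using ab True F2 e0 unfolding h_def by (intro chord_mono) auto
              finally show ?thesis .
            next
              case F3: False
              then show ?thesis using False F2 cv abD ab unfolding h_def by auto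
            qed
          qed
        qed
      qed
    qed
    have "h x \<le> L x" using lce_upper[OF hO D(1)] L_def by simp
    then show False using e0 h_def by simp
  qed
  have "(L x - L p) / (real x - real p) = (L q - L x) / (real q - real x)"
    using eq o unfolding c_def by (simp add: field_simps)
  then show ?thesis unfolding L_def .
qed

lemma nonincr:
  fixes L f g2 :: "nat \<Rightarrow> real" and D :: "nat set"
  assumes cv: "convex_onD D L" and Lf: "\<forall>x\<in>D. L x \<le> f x"
    and g2_lim: "((\<lambda>n. g2 n / real n) \<longlongrightarrow> 0) (inf sequentially (principal D))"
    and inf_often: "infinite {n\<in>D. f n \<le> g2 n}"
    and mD: "m \<in> D" and m'D: "m' \<in> D" and mm: "m < m'"
  shows "L m' \<le> L m"
proof (rule ccontr)
  assume "\<not> ?thesis"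
  hence lt: "L m < L m'" by simp
  define \<phi> where "\<phi> n = ((real n - real m')*L m + (real m' - real m)*g2 n)/(real n - real m)" for n
  have t1: "((\<lambda>n. (real n - real m')/(real n - real m)) \<longlongrightarrow> 1) sequentially" by real_asymp
  have t2: "((\<lambda>n. real n/(real n - real m)) \<longlongrightarrow> 1) sequentially" by real_asymp
  have lim: "((\<lambda>n. L m * ((real n - real m')/(real n - real m)) + (real m' - real m) * (g2 n / real n) * (real n/(real n - real m)))
     \<longlongrightarrow> L m * 1 + (real m' - real m)*0*1) (inf sequentially (principal D))"
    by (intro tendsto_intros tendsto_mono[OF inf_le1 t1] tendsto_mono[OF inf_le1 t2] g2_lim)
  have ev: "eventually (\<lambda>n. L m * ((real n - real m')/(real n - real m)) + (real m' - real m) * (g2 n / real n) * (real n/(real n - real m)) = \<phi> n) (inf sequentially (principal D))"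
    unfolding eventually_inf_principal eventually_sequentially
  proof (intro exI[of _ "Suc m"] allI impI)
    fix n assume "Suc m \<le> n" "n \<in> D"
    then have nz: "real n - real m \<noteq> 0" "real n \<noteq> 0" by auto
    then show "L m * ((real n - real m')/(real n - real m)) + (real m' - real m) * (g2 n / real n) * (real n/(real n - real m)) = \<phi> n"
      unfolding \<phi>_def using nz by (simp add: divide_simps del: of_nat_eq_iff)
  qed
  have "(\<phi> \<longlongrightarrow> L m) (inf sequentially (principal D))"
    using tendsto_cong[OF ev] lim by simp
  then have "eventually (\<lambda>n. \<phi> n < L m') (inf sequentially (principal D))"
    using lt order_tendstoD(2) by blast
  then obtain N where N: "\<forall>n\<ge>N. n \<in> D \<longrightarrow> \<phi> n < L m'"
    unfolding eventually_inf_principal eventually_sequentially by blast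
  obtain n where n: "n \<in> {n\<in>D. f n \<le> g2 n}" "max N (Suc m') \<le> n"
    using inf_often infinite_nat_iff_unbounded_le by blast
  have "L m' \<le> ((real n - real m')*L m + (real m' - real m)*L n)/(real n - real m)"
    using cv mD m'D n mm unfolding convex_onD_def by auto
  also have "\<dots> \<le> \<phi> n" unfolding \<phi>_def
    using n Lf mm by (intro chord_mono) auto
  also have "\<dots> < L m'" using N n by auto
  finally show False by simp
qed

lemma enum_fin:
  fixes S :: "real set"
  assumes "finite S" "(0::real) \<in> S" "\<forall>s\<in>S. s \<le> 0"
  shows "\<exists>k::nat. \<exists>a::nat \<Rightarrow> real. k \<ge> 1 \<and> strict_mono_on {1..k} a \<and> S = a ` {1..k} \<and> a k = 0"
proof -
  define xs where "xs = sorted_list_of_set S"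
  define k where "k = length xs"
  define a where "a = (\<lambda>i. xs ! (i - 1))"
  have sx: "set xs = S" using assms(1) xs_def by simp
  have sw: "sorted_wrt (<) xs" using xs_def strict_sorted_list_of_set by blast
  have k1: "k \<ge> 1" using sx assms(2) k_def by (cases xs) auto
  have sm: "strict_mono_on {1..k} a"
    unfolding strict_mono_on_def a_def
    using sorted_wrt_nth_less[OF sw] k_def by (auto simp: diff_less_mono)
  have im: "S = a ` {1..k}"
  proof
    show "S \<subseteq> a ` {1..k}"
    proof
      fix s assume "s \<in> S"
      then obtain i where "i < k" "xs ! i = s" using sx k_def by (metis in_set_conv_nth)
      then show "s \<in> a ` {1..k}" unfolding a_def by (intro image_eqI[of _ _ "Suc i"]) auto
    qed
    show "a ` {1..k} \<subseteq> S" unfolding a_def using sx k_def by auto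
  qed
  have akS: "a k \<in> S" using im k1 by auto
  have "\<forall>s\<in>S. s \<le> a k"
  proof
    fix s assume "s \<in> S"
    then obtain i where i: "i \<in> {1..k}" "s = a i" using im by auto
    show "s \<le> a k"
    proof (cases "i = k")
      case False
      then have "i < k" using i by auto
      then have "a i < a k" using sm i k1 unfolding strict_mono_on_def by auto
      then show ?thesis using i by simp
    qed (use i in simp)
  qed
  then have "a k = 0" using akS assms by force
  then show ?thesis using k1 sm im by blast
qed

lemma succD_props:
  assumes "infinite D"
  shows "succD D x \<in> D \<and> x < succD D x \<and> (\<forall>y\<in>D. x < y \<longrightarrow> succD D x \<le> y)"
proof -
  have ex: "\<exists>y. y \<in> D \<and> x < y" using assms infinite_nat_iff_unbounded by blast
  show ?thesis unfolding succD_def using LeastI_ex[OF ex] Least_le[of "\<lambda>y. y \<in> D \<and> x < y"] by blast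
qed

lemma predD_props:
  assumes "y0 \<in> D" "y0 < x"
  shows "predD D x \<in> D \<and> predD D x < x \<and> (\<forall>y\<in>D. y < x \<longrightarrow> y \<le> predD D x)"
proof -
  have fin: "finite {y\<in>D. y < x}" by (rule finite_subset[of _ "{..<x}"]) auto
  have ne: "{y\<in>D. y < x} \<noteq> {}" using assms by auto
  show ?thesis unfolding predD_def using Max_in[OF fin ne] Max_ge[OF fin] by auto
qed

lemma succD_predD:
  assumes "x \<in> D" "y0 \<in> D" "y0 < x"
  shows "succD D (predD D x) = x"
proof -
  note P = predD_props[OF assms(2,3)]
  show ?thesis unfolding succD_def
  proof (rule Least_equality)
    show "x \<in> D \<and> predD D x < x" using P assms by auto
    fix y assume "y \<in> D \<and> predD D x < y"
    then show "x \<le> y" using P by (meson leI not_le)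
  qed
qed

theorem lemma4:
  fixes D :: "nat set" and f g1 g2 :: "nat \<Rightarrow> real"
  assumes g12: "\<forall>n\<in>D. g2 n \<ge> g1 n"
    and g1_lim: "filterlim g1 at_top (inf sequentially (principal D))"
    and g2_lim: "((\<lambda>n. g2 n / real n) \<longlongrightarrow> 0) (inf sequentially (principal D))"
    and n0: "\<exists>n0\<in>D. \<forall>n\<in>D. n \<ge> n0 \<longrightarrow> f n \<ge> g1 n"
    and inf_often: "infinite {n\<in>D. f n \<le> g2 n}"
  shows "Omega D f \<noteq> {} \<and>
         (\<exists>k::nat. \<exists>a::nat \<Rightarrow> real. k \<ge> 1 \<and> strict_mono_on {1..k} a \<and>
            slopes D f = a ` {1..k} \<and> a k = 0)"
proof -
  have Dinf: "infinite D" using inf_often infinite_super[of "{n\<in>D. f n \<le> g2 n}" D] by blast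
  then obtain d where dD: "d \<in> D" by (metis finite.emptyI equals0I)
  obtain n1 where n1: "n1 \<in> D" "\<forall>n\<in>D. n \<ge> n1 \<longrightarrow> f n \<ge> g1 n" using n0 by blast
  have "eventually (\<lambda>n. g1 n > f d) (inf sequentially (principal D))"
    using g1_lim filterlim_at_top_dense by blast
  then obtain N where N: "\<forall>n\<ge>N. n \<in> D \<longrightarrow> g1 n > f d"
    unfolding eventually_inf_principal eventually_sequentially by blast
  define S where "S = {n\<in>D. n < max N n1} \<union> {d}"
  have finS: "finite S" unfolding S_def by (rule finite_UnI) (rule finite_subset[of _ "{..<max N n1}"], auto)
  have neS: "f ` S \<noteq> {}" unfolding S_def by auto
  obtain ms where ms: "ms \<in> S" "f ms = Min (f ` S)" using Min_in[OF finite_imageI[OF finS] neS] by auto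
  have msD: "ms \<in> D" using ms dD unfolding S_def by auto
  have fmin: "\<forall>y\<in>D. f ms \<le> f y"
  proof
    fix y assume yD: "y \<in> D"
    show "f ms \<le> f y"
    proof (cases "y < max N n1")
      case True then have "y \<in> S" using yD S_def by auto
      then show ?thesis using ms Min_le[OF finite_imageI[OF finS]] by auto
    next
      case False
      then have "f y \<ge> g1 y" "g1 y > f d" using n1 N yD by auto
      moreover have "f ms \<le> f d" using ms Min_le[OF finite_imageI[OF finS]] S_def by auto
      ultimately show ?thesis by simp
    qed
  qed
  define M where "M = f ms"
  have constO: "(\<lambda>_. M) \<in> Omega D f"
    unfolding Omega_def convex_onD_def using fmin M_def by (auto simp: field_simps)
  then have Om: "Omega D f \<noteq> {}" by blast
  define L where "L = lce D f"
  have cv: "convex_onD D L" using lce_convex[OF Om] L_def by simp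
  have Lf: "\<forall>x\<in>D. L x \<le> f x" using lce_le[OF Om] L_def by simp
  have LM: "\<forall>x\<in>D. M \<le> L x" using lce_upper[OF constO] L_def by simp
  have ninc: "\<And>m m'. m \<in> D \<Longrightarrow> m' \<in> D \<Longrightarrow> m < m' \<Longrightarrow> L m' \<le> L m"
    using nonincr[OF cv Lf g2_lim inf_often] by blast
  have Lconst: "\<And>x. x \<in> D \<Longrightarrow> ms \<le> x \<Longrightarrow> L x = M"
  proof -
    fix x assume x: "x \<in> D" "ms \<le> x"
    have "L x \<le> L ms" using ninc[OF msD x(1)] x by (cases "ms = x") auto
    also have "\<dots> \<le> M" using Lf msD M_def by auto
    finally show "L x = M" using LM x by force
  qed
  note sP = succD_props[OF Dinf]
  define V where "V = vertices D f"
  have VD: "V \<subseteq> D" unfolding V_def vertices_def by auto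
  have Vms: "V \<subseteq> {..ms}"
  proof
    fix x assume xV: "x \<in> V"
    show "x \<in> {..ms}"
    proof (rule ccontr)
      assume "x \<notin> {..ms}"
      then have gt: "ms < x" by simp
      have xD: "x \<in> D" using xV VD by auto
      have "x \<noteq> (LEAST y. y \<in> D)" using Least_le[of "\<lambda>y. y \<in> D", OF msD] gt by auto
      then have cs: "changes_slope D L x" using xV unfolding V_def vertices_def L_def by auto
      note pP = predD_props[OF msD gt]
      have "L (predD D x) = M" using pP Lconst msD gt by auto
      moreover have "L x = M" using Lconst xD gt by auto
      moreover have "L (succD D x) = M" using Lconst sP[of x] gt by auto
      ultimately show False using cs unfolding changes_slope_def by simp
    qed
  qed
  have finV: "finite V" using finite_subset[OF Vms] by simp
  have LV: "(LEAST y. y \<in> D) \<in> V" unfolding V_def vertices_def using LeastI[of "\<lambda>y. y \<in> D", OF dD] by auto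
  then have neV: "V \<noteq> {}" by auto
  define mV where "mV = Max V"
  have mVV: "mV \<in> V" using Max_in[OF finV neV] mV_def by simp
  have mVD: "mV \<in> D" using mVV VD by auto
  define s where "s x = (L (succD D x) - L x) / (real (succD D x) - real x)" for x
  have step: "\<And>x. x \<in> D \<Longrightarrow> mV < x \<Longrightarrow> s (predD D x) = s x"
  proof -
    fix x assume xD: "x \<in> D" and gt: "mV < x"
    have xnV: "x \<notin> V" using gt Max_ge[OF finV] mV_def by fastforce
    note pP = predD_props[OF mVD gt]
    have sp: "succD D (predD D x) = x" using succD_predD[OF xD mVD gt] .
    have eq: "(L x - L (predD D x)) / (real x - real (predD D x))
       = (L (succD D x) - L x) / (real (succD D x) - real x)"
    proof (cases "L x = f x")
      case True
      then have "\<not> changes_slope D L x" using xnV xD unfolding V_def vertices_def L_def by auto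
      moreover have "\<exists>y\<in>D. y < x" using mVD gt by blast
      moreover have "\<exists>y\<in>D. x < y" using sP[of x] by blast
      ultimately show ?thesis unfolding changes_slope_def by blast
    next
      case False
      then have "lce D f x < f x" using Lf xD L_def by force
      from no_kink[OF Om xD _ _ _ _ _ _ this, of "predD D x" "succD D x"]
      show ?thesis using pP sP[of x] unfolding L_def by blast
    qed
    show "s (predD D x) = s x" unfolding s_def sp using eq by simp
  qed
  have ind: "\<And>x. x \<in> D \<Longrightarrow> mV \<le> x \<Longrightarrow> s x = s mV"
  proof -
    fix x show "x \<in> D \<Longrightarrow> mV \<le> x \<Longrightarrow> s x = s mV"
    proof (induction x rule: less_induct)
      case (less x)
      show ?case
      proof (cases "x = mV")
        case False
        then have gt: "mV < x" using less by simp
        note pP = predD_props[OF mVD gt]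
        have "mV \<le> predD D x" using pP mVD gt by auto
        then have "s (predD D x) = s mV" using less.IH pP by blast
        then show ?thesis using step less gt by simp
      qed simp
    qed
  qed
  define x1 where "x1 = max mV ms"
  have x1D: "x1 \<in> D" using mVD msD x1_def by (simp add: max_def)
  have "s x1 = 0" unfolding s_def using Lconst[OF x1D] Lconst sP[of x1] x1_def by simp
  then have smV: "s mV = 0" using ind[OF x1D] x1_def by simp
  have "s mV \<in> slopes D f"
    unfolding slopes_def s_def L_def mV_def V_def
    apply (rule UnI2)
    using Dinf finV unfolding V_def by blast
  then have zero_in: "0 \<in> slopes D f" using smV by simp
  have sub: "slopes D f \<subseteq> (\<lambda>(m,m'). (L m' - L m) / (real m' - real m)) ` (V \<times> V) \<union> {s mV}"
    unfolding slopes_def s_def L_def V_def mV_def by auto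
  have le0: "\<forall>z\<in>(\<lambda>(m,m'). (L m' - L m) / (real m' - real m)) ` (V \<times> V) \<union> {s mV}. z \<le> 0"
  proof
    fix z assume "z \<in> (\<lambda>(m,m'). (L m' - L m) / (real m' - real m)) ` (V \<times> V) \<union> {s mV}"
    then consider "z = s mV" | m m' where "m \<in> V" "m' \<in> V" "z = (L m' - L m) / (real m' - real m)" by auto
    then show "z \<le> 0"
    proof cases
      case 1 then show ?thesis using smV by simp
    next
      case (2 m m')
      consider "m < m'" | "m = m'" | "m' < m" by linarith
      then show ?thesis
      proof cases
        case 1 then have "L m' \<le> L m" using ninc 2 VD by auto
        then show ?thesis using 2 1 by (simp add: divide_nonpos_pos)
      next
        case 3 then have "L m \<le> L m'" using ninc 2 VD by auto
        then show ?thesis using 2 3 by (simp add: divide_nonneg_neg)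
      qed (use 2 in simp)
    qed
  qed
  have fin: "finite (slopes D f)" using finite_subset[OF sub] finV by auto
  show ?thesis using Om enum_fin[OF fin zero_in] le0 sub by blast
qed

end
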